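(* Let $Q$ be a Jordan loop and $x\in Q$. Then (i) $x^2x^{-1}=x$; (ii) $x^4x^{-1}=x^3$; (iii) if $x^3x^8=x^{11}$, then $x^8x^{-1}=x^7$.
   Context: A loop is a set $Q$ with a binary operation (juxtaposition) and neutral element $e$ such that for all $a,b$ the equations $ax=b$, $ya=b$ have unique solutions. A Jordan loop is a commutative loop satisfying $x^2(yx)=(x^2y)x$. For $k\ge 0$, $x^k$ denotes the right-associated product $x(x(\cdots(xe)\cdots))$ with $k$ factors $x$. Since the loop is commutative, each $x$ has a unique inverse $x^{-1}$ with $xx^{-1}=x^{-1}x=e$. *)

theory Defs
  imports Main
begin

definition loop :: "'a set \<Rightarrow> ('a \<Rightarrow> 'a \<Rightarrow> 'a) \<Rightarrow> 'a \<Rightarrow> bool" where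
  "loop Q m e \<longleftrightarrow>
     (\<forall>a\<in>Q. \<forall>b\<in>Q. m a b \<in> Q) \<and> e \<in> Q \<and>
     (\<forall>a\<in>Q. m e a = a \<and> m a e = a) \<and>
     (\<forall>a\<in>Q. \<forall>b\<in>Q. \<exists>!x. x \<in> Q \<and> m a x = b) \<and>
     (\<forall>a\<in>Q. \<forall>b\<in>Q. \<exists>!y. y \<in> Q \<and> m y a = b)"

definition jordan_loop :: "'a set \<Rightarrow> ('a \<Rightarrow> 'a \<Rightarrow> 'a) \<Rightarrow> 'a \<Rightarrow> bool" where
  "jordan_loop Q m e \<longleftrightarrow> loop Q m e \<and>
     (\<forall>x\<in>Q. \<forall>y\<in>Q. m x y = m y x) \<and>
     (\<forall>x\<in>Q. \<forall>y\<in>Q. m (m x x) (m y x) = m (m (m x x) y) x)"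

fun lpow :: "('a \<Rightarrow> 'a \<Rightarrow> 'a) \<Rightarrow> 'a \<Rightarrow> 'a \<Rightarrow> nat \<Rightarrow> 'a" where
  "lpow m e x 0 = e"
| "lpow m e x (Suc k) = m x (lpow m e x k)"

definition linv :: "'a set \<Rightarrow> ('a \<Rightarrow> 'a \<Rightarrow> 'a) \<Rightarrow> 'a \<Rightarrow> 'a \<Rightarrow> 'a" where
  "linv Q m e x = (THE y. y \<in> Q \<and> m x y = e)"

end

theory Submission
  imports Defs
begin

theorem lemma2p5:
  fixes Q :: "'a set" and m :: "'a \<Rightarrow> 'a \<Rightarrow> 'a" and e x :: 'a
  assumes "jordan_loop Q m e" and "x \<in> Q"
  shows "m (lpow m e x 2) (linv Q m e x) = x
         \<and> m (lpow m e x 4) (linv Q m e x) = lpow m e x 3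
         \<and> (m (lpow m e x 3) (lpow m e x 8) = lpow m e x 11 \<longrightarrow>
              m (lpow m e x 8) (linv Q m e x) = lpow m e x 7)"
proof -
  have L: "loop Q m e" and com: "\<And>a b. a \<in> Q \<Longrightarrow> b \<in> Q \<Longrightarrow> m a b = m b a"
    and J: "\<And>a y. a \<in> Q \<Longrightarrow> y \<in> Q \<Longrightarrow> m (m a a) (m y a) = m (m (m a a) y) a"
    using assms(1) unfolding jordan_loop_def by blast+
  have L': "(\<forall>a\<in>Q. \<forall>b\<in>Q. m a b \<in> Q) \<and> e \<in> Q \<and>
     (\<forall>a\<in>Q. m e a = a \<and> m a e = a) \<and>
     (\<forall>a\<in>Q. \<forall>b\<in>Q. \<exists>!x. x \<in> Q \<and> m a x = b)"
    using L unfolding loop_def by (elim conjE) (intro conjI)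
  have H1: "\<forall>a\<in>Q. \<forall>b\<in>Q. m a b \<in> Q" using L' by (elim conjE)
  have eQ: "e \<in> Q" using L' by (elim conjE)
  have H3: "\<forall>a\<in>Q. m e a = a \<and> m a e = a" using L' by (elim conjE)
  have H: "\<forall>a\<in>Q. \<forall>b\<in>Q. \<exists>!x. x \<in> Q \<and> m a x = b" using L' by (elim conjE)
  have cl: "\<And>a b. a \<in> Q \<Longrightarrow> b \<in> Q \<Longrightarrow> m a b \<in> Q"
    by (rule bspec[OF bspec[OF H1]])
  have eL: "\<And>a. a \<in> Q \<Longrightarrow> m e a = a" using H3 by blast
  have eR: "\<And>a. a \<in> Q \<Longrightarrow> m a e = a" using H3 by blast
  have lu: "\<And>a b. a \<in> Q \<Longrightarrow> b \<in> Q \<Longrightarrow> \<exists>!z. z \<in> Q \<and> m a z = b"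
  proof -
    fix a b assume ab: "a \<in> Q" "b \<in> Q"
    show "\<exists>!z. z \<in> Q \<and> m a z = b" using bspec[OF bspec[OF H ab(1)] ab(2)] .
  qed
  have canc: "\<And>a u v. a \<in> Q \<Longrightarrow> u \<in> Q \<Longrightarrow> v \<in> Q \<Longrightarrow> m a u = m a v \<Longrightarrow> u = v"
  proof -
    fix a u v assume a: "a \<in> Q" "u \<in> Q" "v \<in> Q" "m a u = m a v"
    have "\<exists>z. (z \<in> Q \<and> m a z = m a u) \<and> (\<forall>y. y \<in> Q \<and> m a y = m a u \<longrightarrow> y = z)"
      using lu[OF a(1) cl[OF a(1) a(2)]] unfolding Ex1_def .
    then obtain z where z: "\<forall>y. y \<in> Q \<and> m a y = m a u \<longrightarrow> y = z" by blast
    have "u = z" using z[rule_format, of u] a(2) by simp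
    moreover have "v = z" using z[rule_format, of v] a(3) a(4) by simp
    ultimately show "u = v" by simp
  qed
  have C: "\<And>a y. a \<in> Q \<Longrightarrow> y \<in> Q \<Longrightarrow> m (m a a) (m a y) = m a (m (m a a) y)"
  proof -
    fix a y assume a: "a \<in> Q" "y \<in> Q"
    have "m (m a a) (m a y) = m (m a a) (m y a)" using com[OF a(1) a(2)] by simp
    also have "\<dots> = m (m (m a a) y) a" using J a by simp
    also have "\<dots> = m a (m (m a a) y)" using com[OF cl[OF cl[OF a(1) a(1)] a(2)] a(1)] by simp
    finally show "m (m a a) (m a y) = m a (m (m a a) y)" .
  qed
  define p where "p = lpow m e x"
  have pQ: "\<And>k. p k \<in> Q" unfolding p_def
    by (induct_tac k) (auto simp: eQ cl assms(2))
  have pS: "\<And>k. p (Suc k) = m x (p k)" unfolding p_def by simp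
  have p0: "p 0 = e" unfolding p_def by simp
  have p1: "p 1 = x" using pS[of 0] p0 eR assms(2) by simp
  have p2: "p 2 = m x x" using pS[of 1] p1 by (simp add: numeral_2_eq_2)
  have p2Q: "m x x \<in> Q" using cl assms(2) by simp
  have sh: "\<And>k. p (k+2) = m (p 2) (p k)"
  proof -
    fix k show "p (k+2) = m (p 2) (p k)"
    proof (induct k)
      case 0 then show ?case using p0 eR pQ by (simp add: numeral_2_eq_2)
    next
      case (Suc k)
      have "p (Suc k + 2) = m x (p (k+2))" using pS by simp
      also have "\<dots> = m x (m (m x x) (p k))" using Suc p2 by simp
      also have "\<dots> = m (m x x) (m x (p k))" using C[OF assms(2) pQ[of k]] by simp
      finally show ?case using pS p2 by simp
    qed
  qed
  obtain xi where xi: "xi \<in> Q" "m x xi = e" using lu[OF assms(2) eQ] by auto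
  have linv: "linv Q m e x = xi" unfolding linv_def
  proof (rule the_equality)
    show "xi \<in> Q \<and> m x xi = e" using xi by simp
    show "\<And>y. y \<in> Q \<and> m x y = e \<Longrightarrow> y = xi" using canc[OF assms(2) _ xi(1)] xi(2) by simp
  qed
  have i: "m (p 2) xi = x"
  proof -
    have "m x (m (p 2) xi) = m (p 2) (m x xi)" using C[OF assms(2) xi(1)] p2 by simp
    also have "\<dots> = m x x" using xi p2 eR p2Q by simp
    finally show ?thesis using canc[OF assms(2) cl[OF pQ xi(1)] assms(2)] by simp
  qed
  have p4: "p 4 = m (p 2) (p 2)" using sh[of 2] by simp
  have C4: "\<And>y. y \<in> Q \<Longrightarrow> m (p 4) (m (p 2) y) = m (p 2) (m (p 4) y)"
    using C[OF pQ[of 2]] p4 by simp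
  have ii: "m (p 4) xi = p 3"
  proof -
    have "m (p 2) (m (p 4) xi) = m (p 4) x" using C4[OF xi(1)] i by simp
    also have "\<dots> = p 5" using com[OF pQ[of 4] assms(2)] pS[of 4] by simp
    also have "\<dots> = m (p 2) (p 3)" using sh[of 3] by simp
    finally show ?thesis using canc[OF pQ cl[OF pQ xi(1)] pQ] by blast
  qed
  have "m (p 4) (p 3) = m (p 2) (p 5)"
  proof -
    have s3: "p 3 = m (p 2) x" using sh[of 1] p1 by (simp add: eval_nat_numeral)
    have "m (p 4) (p 3) = m (p 4) (m (p 2) x)" using s3 by simp
    also have "\<dots> = m (p 2) (m (p 4) x)" using C4[OF assms(2)] by simp
    also have "m (p 4) x = p 5" using com[OF pQ[of 4] assms(2)] pS[of 4] by simp
    finally show ?thesis by simp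
  qed
  hence q7: "m (p 4) (p 3) = p 7" using sh[of 5] by simp
  have q6: "m (p 4) (p 2) = p 6"
    using C4[OF eQ] eR[OF pQ] eR[OF pQ[of 2]] sh[of 4] by simp
  have q8: "m (p 4) (p 4) = p 8"
    using C4[OF pQ[of 2]] q6 sh[of 6] p4 by simp
  have q9: "m (p 4) (p 5) = p 9"
    using C4[OF pQ[of 3]] q7 sh[of 7] sh[of 3] by simp
  have q11: "m (p 4) (p 7) = p 11"
    using C4[OF pQ[of 5]] q9 sh[of 9] sh[of 5] by simp
  have C8: "\<And>y. y \<in> Q \<Longrightarrow> m (p 8) (m (p 4) y) = m (p 4) (m (p 8) y)"
    using C[OF pQ[of 4]] q8 by simp
  have iii: "m (p 3) (p 8) = p 11 \<Longrightarrow> m (p 8) xi = p 7"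
  proof -
    assume h: "m (p 3) (p 8) = p 11"
    have "m (p 4) (m (p 8) xi) = m (p 8) (p 3)" using C8[OF xi(1)] ii by simp
    also have "\<dots> = p 11" using com[OF pQ[of 8] pQ[of 3]] h by simp
    also have "\<dots> = m (p 4) (p 7)" using q11 by simp
    finally show ?thesis using canc[OF pQ cl[OF pQ xi(1)] pQ] by blast
  qed
  show ?thesis using i ii iii linv unfolding p_def by simp
qed

end
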